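(* Let $F_{ij}$ ($0\le i\le m$, $0\le j\le n$) be a dual-convex $m\times n$ net in $I^3$ and let $V_{ij}\in\mathbb R^3$ be vectors such that for each $0\le k<m$, $0\le l<n$ there is an infinitesimal isotropic congruence $V$ (depending on $k,l$) with $V_{ij}=V(F_{ij})$ for all $i\in\{k,k+1\}$, $j\in\{l,l+1\}$. Then $F_{ij}+tV_{ij}$ is a dual-convex $m\times n$ net for all $t$ sufficiently small in absolute value.
   Context: $I^3$ is $\mathbb{R}^3$ with coordinates $(x,y,z)$; a line or plane is isotropic if parallel to the $z$-axis. An infinitesimal isotropic congruence is a vector field $V(\mathbf x)=a\mathbf x+\mathbf b$ with $\mathbf b\in\mathbb R^3$ and $a=\begin{pmatrix}0&-\phi&0\\ \phi&0&0\\ c_1&c_2&0\end{pmatrix}$, $\phi,c_1,c_2\in\mathbb R$. An $m\times n$ net: points $F_{ij}$, $0\le i\le m,0\le j\le n$, with $F_{ij},F_{i+1,j},F_{i+1,j+1},F_{i,j+1}$ consecutive vertices of a convex planar quadrilateral (face $p_{ij}$) for all $0\le i<m,0\le j<n$. Boundary vertices: $i\in\{0,m\}$ or $j\in\{0,n\}$; consecutive faces around non-boundary $F_{ij}$: $p_{i-1,j-1},p_{i,j-1},p_{ij},p_{i-1,j}$. Convex 4-hedral angle with vertex $O$: union of rays from $O$ meeting a convex quadrilateral in a plane not through $O$; flat angles: rays through one side; admissible: isotropic line through $O$ meets its interior. Dual-convex: $m,n\ge2$ and at each non-boundary vertex the four consecutive face planes are the planes of four consecutive flat angles of an admissible convex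 4-hedral angle. *)

theory Defs
  imports "HOL-Analysis.Analysis"
begin

type_synonym pt = "real^3"

text \<open>Isotropic direction: the z-axis.\<close>
definition e3 :: pt where "e3 = vector [0, 0, 1]"

definition iso_matrix :: "real \<Rightarrow> real \<Rightarrow> real \<Rightarrow> real^3^3" where
  "iso_matrix \<phi> c1 c2 =
     vector [vector [0, -\<phi>, 0], vector [\<phi>, 0, 0], vector [c1, c2, 0]]"

definition inf_iso_congruence :: "(pt \<Rightarrow> pt) \<Rightarrow> bool" where
  "inf_iso_congruence V \<longleftrightarrow>
     (\<exists>\<phi> c1 c2 (b::pt). \<forall>x. V x = iso_matrix \<phi> c1 c2 *v x + b)"

text \<open>A, B, C, D are consecutive vertices of a (non-degenerate) convex planar
  quadrilateral: the open diagonals meet and the points are not collinear.\<close>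
definition convex_quad :: "pt \<Rightarrow> pt \<Rightarrow> pt \<Rightarrow> pt \<Rightarrow> bool" where
  "convex_quad A B C D \<longleftrightarrow>
     (open_segment A C \<inter> open_segment B D \<noteq> {}) \<and> \<not> collinear {A, B, C, D}"

definition is_net :: "nat \<Rightarrow> nat \<Rightarrow> (nat \<Rightarrow> nat \<Rightarrow> pt) \<Rightarrow> bool" where
  "is_net m n F \<longleftrightarrow>
     (\<forall>i<m. \<forall>j<n. convex_quad (F i j) (F (Suc i) j) (F (Suc i) (Suc j)) (F i (Suc j)))"

definition face_plane :: "(nat \<Rightarrow> nat \<Rightarrow> pt) \<Rightarrow> nat \<Rightarrow> nat \<Rightarrow> pt set" where
  "face_plane F i j = affine hull {F i j, F (Suc i) j, F (Suc i) (Suc j), F i (Suc j)}"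

definition hedral_angle :: "pt \<Rightarrow> pt \<Rightarrow> pt \<Rightarrow> pt \<Rightarrow> pt \<Rightarrow> pt set" where
  "hedral_angle X Q1 Q2 Q3 Q4 =
     {X + s *\<^sub>R (q - X) | s q. s \<ge> 0 \<and> q \<in> convex hull {Q1, Q2, Q3, Q4}}"

definition admissible_angle_planes :: "pt \<Rightarrow> pt set \<Rightarrow> pt set \<Rightarrow> pt set \<Rightarrow> pt set \<Rightarrow> bool" where
  "admissible_angle_planes X P1 P2 P3 P4 \<longleftrightarrow>
     (\<exists>Q1 Q2 Q3 Q4.
        convex_quad Q1 Q2 Q3 Q4 \<and> X \<notin> affine hull {Q1, Q2, Q3, Q4} \<and>
        P1 = affine hull {X, Q1, Q2} \<and> P2 = affine hull {X, Q2, Q3} \<and>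
        P3 = affine hull {X, Q3, Q4} \<and> P4 = affine hull {X, Q4, Q1} \<and>
        (\<exists>t. X + t *\<^sub>R e3 \<in> interior (hedral_angle X Q1 Q2 Q3 Q4)))"

definition dual_convex :: "nat \<Rightarrow> nat \<Rightarrow> (nat \<Rightarrow> nat \<Rightarrow> pt) \<Rightarrow> bool" where
  "dual_convex m n F \<longleftrightarrow>
     is_net m n F \<and> 2 \<le> m \<and> 2 \<le> n \<and>
     (\<forall>i j. 0 < i \<and> i < m \<and> 0 < j \<and> j < n \<longrightarrow>
        admissible_angle_planes (F i j)
          (face_plane F (i - 1) (j - 1)) (face_plane F i (j - 1))
          (face_plane F i j) (face_plane F (i - 1) j))"

end

theory Submission
  imports Defs
begin


definition trip :: "pt \<Rightarrow> pt \<Rightarrow> pt \<Rightarrow> real" where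
  "trip a b c = a$1 * (b$2 * c$3 - b$3 * c$2) - a$2 * (b$1 * c$3 - b$3 * c$1) + a$3 * (b$1 * c$2 - b$2 * c$1)"

lemma trip_lin1: "trip (x *\<^sub>R a + y *\<^sub>R b + z *\<^sub>R c) b c = x * trip a b c"
  unfolding trip_def by (simp add: algebra_simps)
lemma trip_lin2: "trip a (x *\<^sub>R a + y *\<^sub>R b + z *\<^sub>R c) c = y * trip a b c"
  unfolding trip_def by (simp add: algebra_simps)
lemma trip_lin3: "trip a b (x *\<^sub>R a + y *\<^sub>R b + z *\<^sub>R c) = z * trip a b c"
  unfolding trip_def by (simp add: algebra_simps)
lemma trip_scale: "trip (x *\<^sub>R a) (y *\<^sub>R b) (z *\<^sub>R c) = x * y * z * trip a b c"
  unfolding trip_def by (simp add: algebra_simps)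

lemma trip_cramer:
  assumes "trip a b c \<noteq> 0"
  shows "w = (trip w b c / trip a b c) *\<^sub>R a + (trip a w c / trip a b c) *\<^sub>R b + (trip a b w / trip a b c) *\<^sub>R c"
proof -
  have "trip a b c *\<^sub>R w = trip w b c *\<^sub>R a + trip a w c *\<^sub>R b + trip a b w *\<^sub>R c"
    unfolding trip_def vec_eq_iff forall_3 by (simp add: algebra_simps)
  then have "w = (1 / trip a b c) *\<^sub>R (trip w b c *\<^sub>R a + trip a w c *\<^sub>R b + trip a b w *\<^sub>R c)"
    using assms by (metis (no_types) divide_self_if nonzero_eq_divide_eq scaleR_one scaleR_scaleR)
  then show ?thesis using assms by (simp add: scaleR_add_right)
qed

lemma trip_indep:
  assumes "trip a b c \<noteq> 0" "x *\<^sub>R a + y *\<^sub>R b + z *\<^sub>R c = 0"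
  shows "x = 0 \<and> y = 0 \<and> z = 0"
proof -
  have "x * trip a b c = 0" using trip_lin1[of x a y b z c] assms(2) by (simp add: trip_def)
  moreover have "y * trip a b c = 0" using trip_lin2[of a x y b z c] assms(2) by (simp add: trip_def)
  moreover have "z * trip a b c = 0" using trip_lin3[of a b x y z c] assms(2) by (simp add: trip_def)
  ultimately show ?thesis using assms(1) by simp
qed

lemma trip_det0: "trip a b c = det (vector [a, b, c] :: real^3^3)"
  unfolding trip_def det_3 by (simp add: vector_3 algebra_simps)
lemma trip_det: "trip a b c = det (transpose (vector [a, b, c] :: real^3^3))"
  by (simp only: det_transpose trip_det0)

lemma trip_kernel:
  assumes "trip a b c = 0"
  shows "\<exists>x y z. (x \<noteq> 0 \<or> y \<noteq> 0 \<or> z \<noteq> 0) \<and> x *\<^sub>R a + y *\<^sub>R b + z *\<^sub>R c = 0"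
proof -
  let ?A = "transpose (vector [a, b, c] :: real^3^3)"
  have "\<not> inj ((*v) ?A)"
    using assms trip_det invertible_det_nz invertible_left_inverse matrix_left_invertible_injective by metis
  then obtain p q where pq: "p \<noteq> q" "?A *v p = ?A *v q" unfolding inj_def by blast
  let ?r = "p - q"
  have r0: "?r \<noteq> 0" using pq by simp
  have "?A *v ?r = 0" using pq by (simp add: matrix_vector_mult_diff_distrib)
  then have "?r$1 *\<^sub>R a + ?r$2 *\<^sub>R b + ?r$3 *\<^sub>R c = 0"
    unfolding vec_eq_iff forall_3
    by (simp add: matrix_vector_mult_def transpose_def sum_3 algebra_simps)
  moreover have "?r$1 \<noteq> 0 \<or> ?r$2 \<noteq> 0 \<or> ?r$3 \<noteq> 0" using r0 unfolding vec_eq_iff forall_3 by auto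
  ultimately show ?thesis by blast
qed



lemma solve_D:
  fixes M B D :: pt
  assumes "0 < u" "M = (1 - u) *\<^sub>R B + u *\<^sub>R D"
  shows "D = (1/u) *\<^sub>R M + (- (1 - u) / u) *\<^sub>R B"
proof -
  have e: "(- (1 - u) / u) *\<^sub>R B = - (((1 - u) / u) *\<^sub>R B)"
    by (simp only: scaleR_minus_left[symmetric] minus_divide_left)
  have "u *\<^sub>R D = M - (1 - u) *\<^sub>R B" using assms(2) by simp
  then have "(1/u) *\<^sub>R (u *\<^sub>R D) = (1/u) *\<^sub>R (M - (1 - u) *\<^sub>R B)" by simp
  then show ?thesis using assms(1) by (simp only: e) (simp add: scaleR_diff_right)
qed

lemma cq_rot: "convex_quad A B C D \<Longrightarrow> convex_quad B C D A"
  unfolding convex_quad_def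
  by (metis Int_commute insert_commute open_segment_commute)

lemma cq_noncol3:
  assumes "convex_quad A B C D" shows "\<not> collinear {A, B, C}"
proof
  assume col: "collinear {A, B, C}"
  obtain M where M: "M \<in> open_segment A C" "M \<in> open_segment B D"
    using assms unfolding convex_quad_def by blast
  have AC: "A \<noteq> C" using M(1) by (auto simp: in_segment)
  have BB: "B \<in> affine hull {A, C}"
    using col AC collinear_3_affine_hull[of A C B] by (simp add: insert_commute)
  moreover have "M \<in> affine hull {A, C}"
    using M(1) open_closed_segment segment_convex_hull convex_hull_subset_affine_hull by blast
  moreover obtain u where u: "0 < u" "u < 1" "M = (1 - u) *\<^sub>R B + u *\<^sub>R D"
    using M(2) by (auto simp: in_segment)
  ultimately have "D \<in> affine hull {A, C}"
  proof -
    assume B: "B \<in> affine hull {A, C}" and MM: "M \<in> affine hull {A, C}"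
    have "D = (1/u) *\<^sub>R M + (- (1 - u) / u) *\<^sub>R B"
      using u solve_D by blast
    moreover have "(1/u) + (- (1 - u) / u) = 1" using u by (simp add: field_simps)
    ultimately show ?thesis using mem_affine[OF affine_affine_hull MM B] by metis
  qed
  moreover have "A \<in> affine hull {A, C}" "C \<in> affine hull {A, C}" by (auto intro: hull_inc)
  ultimately have "{A, B, C, D} \<subseteq> affine hull {A, C}" using BB by auto
  then have "collinear {A, B, C, D}"
    using collinear_affine_hull by blast
  then show False using assms unfolding convex_quad_def by blast
qed

lemma cq_distinct:
  assumes "convex_quad A B C D"
  shows "A \<noteq> B" "B \<noteq> C" "C \<noteq> D" "D \<noteq> A"
proof -
  have r1: "convex_quad B C D A" using cq_rot assms by blast
  have r2: "convex_quad C D A B" using cq_rot r1 by blast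
  have r3: "convex_quad D A B C" using cq_rot r2 by blast
  show "A \<noteq> B" using cq_noncol3[OF assms] by auto
  show "B \<noteq> C" using cq_noncol3[OF r1] by auto
  show "C \<noteq> D" using cq_noncol3[OF r2] by auto
  show "D \<noteq> A" using cq_noncol3[OF r3] by auto
qed

lemma cq_dim:
  assumes "convex_quad A B C D"
  shows "aff_dim (affine hull {A, B, C, D}) \<le> 2"
proof -
  obtain M where M: "M \<in> open_segment A C" "M \<in> open_segment B D"
    using assms unfolding convex_quad_def by blast
  have MM: "M \<in> affine hull {A, B, C}"
    using M(1) open_closed_segment segment_convex_hull convex_hull_subset_affine_hull
      hull_mono[of "{A, C}" "{A, B, C}"] by blast
  have B: "B \<in> affine hull {A, B, C}" by (auto intro: hull_inc)
  obtain u where u: "0 < u" "u < 1" "M = (1 - u) *\<^sub>R B + u *\<^sub>R D"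
    using M(2) by (auto simp: in_segment)
  have "D = (1/u) *\<^sub>R M + (- (1 - u) / u) *\<^sub>R B"
    using u solve_D by blast
  moreover have "(1/u) + (- (1 - u) / u) = 1" using u by (simp add: field_simps)
  ultimately have "D \<in> affine hull {A, B, C}" using mem_affine[OF affine_affine_hull MM B] by metis
  then have "affine hull {A, B, C, D} = affine hull {A, B, C}"
    using hull_redundant[of D affine "{A, B, C}"] by (simp add: insert_commute)
  moreover have "aff_dim {A, B, C} \<le> 2"
  proof -
    have "card {A, B, C} \<le> 3" by (simp add: card_insert_le_m1)
    then show ?thesis using aff_dim_le_card[of "{A, B, C}"] by simp
  qed
  ultimately show ?thesis by simp
qed

lemma plane_eq:
  fixes P :: "pt set"
  assumes "affine P" "aff_dim P \<le> 2" "{a, b, c} \<subseteq> P" "\<not> collinear {a, b, c}"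
  shows "P = affine hull {a, b, c}"
proof -
  have ind: "\<not> affine_dependent {a, b, c}" "a \<noteq> b" "a \<noteq> c" "b \<noteq> c"
    using assms(4) collinear_3_eq_affine_dependent by blast+
  have "card {a, b, c} = 3" using ind by simp
  then have d: "aff_dim (affine hull {a, b, c}) = 2"
    using aff_dim_affine_independent[OF ind(1)] by simp
  have sub: "affine hull {a, b, c} \<subseteq> P" using assms(1,3) hull_minimal by blast
  have "aff_dim (affine hull {a, b, c}) \<le> aff_dim P" using aff_dim_subset[OF sub] .
  then have "aff_dim (affine hull {a, b, c}) = aff_dim P" using d assms(2) by simp
  then show ?thesis using affine_dim_equal[OF affine_affine_hull assms(1) _ sub] by auto
qed

lemma collinear_affine_image:
  fixes h :: "pt \<Rightarrow> pt"
  assumes "linear h" "collinear S"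
  shows "collinear ((\<lambda>x. h x + d) ` S)"
proof -
  obtain u v where uv: "\<forall>x\<in>S. \<exists>c. x = u + c *\<^sub>R v" using assms(2) collinear_alt by blast
  have "\<forall>y\<in>(\<lambda>x. h x + d) ` S. \<exists>c. y = (h u + d) + c *\<^sub>R h v"
  proof
    fix y assume "y \<in> (\<lambda>x. h x + d) ` S"
    then obtain x where x: "x \<in> S" "y = h x + d" by blast
    obtain c where "x = u + c *\<^sub>R v" using uv x by blast
    then have "y = (h u + d) + c *\<^sub>R h v" using x assms(1) by (simp add: linear_add linear_scale)
    then show "\<exists>c. y = (h u + d) + c *\<^sub>R h v" by blast
  qed
  then show ?thesis using collinear_alt by blast
qed

lemma cq_affine_image:
  fixes f :: "pt \<Rightarrow> pt"
  assumes lf: "linear f" and inj: "inj f" and cq: "convex_quad A B C D"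
  shows "convex_quad (f A + d) (f B + d) (f C + d) (f D + d)"
proof -
  obtain M where M: "M \<in> open_segment A C" "M \<in> open_segment B D"
    using cq unfolding convex_quad_def by blast
  have seg: "f M + d \<in> open_segment (f X + d) (f Y + d)" if h: "M \<in> open_segment X Y" for X Y M
  proof -
    obtain u where u: "X \<noteq> Y" "0 < u" "u < 1" "M = (1 - u) *\<^sub>R X + u *\<^sub>R Y"
      using h unfolding in_segment(2) by blast
    have "f X + d \<noteq> f Y + d" using u(1) inj by (auto dest: injD)
    moreover have "f M + d = (1 - u) *\<^sub>R (f X + d) + u *\<^sub>R (f Y + d)"
    proof -
      have "f M = (1 - u) *\<^sub>R f X + u *\<^sub>R f Y"
        by (simp only: u(4) linear_add[OF lf] linear_scale[OF lf])
      then show ?thesis by (simp add: algebra_simps)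
    qed
    ultimately show ?thesis using u(2,3) by (auto simp: in_segment)
  qed
  have ne: "open_segment (f A + d) (f C + d) \<inter> open_segment (f B + d) (f D + d) \<noteq> {}"
    using seg[OF M(1)] seg[OF M(2)] by blast
  obtain g where g: "linear g" "g \<circ> f = id" using linear_injective_left_inverse[OF lf inj] by blast
  have gf: "g (f x) = x" for x using g(2) by (metis comp_apply id_apply)
  have "\<not> collinear {f A + d, f B + d, f C + d, f D + d}"
  proof
    assume "collinear {f A + d, f B + d, f C + d, f D + d}"
    then have "collinear ((\<lambda>x. g x + (- g d)) ` {f A + d, f B + d, f C + d, f D + d})"
      using collinear_affine_image[OF g(1)] by blast
    moreover have "(\<lambda>x. g x + (- g d)) ` {f A + d, f B + d, f C + d, f D + d} = {A, B, C, D}"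
      using g(1) gf by (simp add: linear_add)
    ultimately show False using cq unfolding convex_quad_def by simp
  qed
  then show ?thesis using ne unfolding convex_quad_def by blast
qed



lemma hull4_in:
  fixes Q1 Q2 Q3 Q4 :: pt
  assumes "a \<ge> 0" "b \<ge> 0" "c \<ge> 0" "d \<ge> 0" "a + b + c + d = 1"
  shows "a *\<^sub>R Q1 + b *\<^sub>R Q2 + c *\<^sub>R Q3 + d *\<^sub>R Q4 \<in> convex hull {Q1, Q2, Q3, Q4}"
proof (cases "a = 1")
  case True
  then have "b = 0" "c = 0" "d = 0" using assms by linarith+
  then show ?thesis using True by (simp add: hull_inc)
next
  case False
  let ?v = "1 - a"
  have v: "?v > 0" using assms False by linarith
  let ?q = "(b / ?v) *\<^sub>R Q2 + (c / ?v) *\<^sub>R Q3 + (d / ?v) *\<^sub>R Q4"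
  have "b / ?v + c / ?v + d / ?v = (b + c + d) / ?v" by (simp add: add_divide_distrib)
  also have "b + c + d = ?v" using assms by linarith
  finally have "b / ?v + c / ?v + d / ?v = 1" using v by simp
  then have q: "?q \<in> convex hull {Q2, Q3, Q4}"
    unfolding convex_hull_3 using assms v by fastforce
  have e: "a *\<^sub>R Q1 + b *\<^sub>R Q2 + c *\<^sub>R Q3 + d *\<^sub>R Q4 = a *\<^sub>R Q1 + ?v *\<^sub>R ?q"
    using v by (simp add: scaleR_add_right)
  have a0: "a \<ge> 0" "?v \<ge> 0" "a + ?v = 1" using assms v by auto
  show ?thesis
    unfolding convex_hull_insert[of "{Q2, Q3, Q4}" Q1, simplified]
    using q a0 e by blast
qed

lemma hull4_out:
  fixes Q1 Q2 Q3 Q4 :: pt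
  assumes "q \<in> convex hull {Q1, Q2, Q3, Q4}"
  shows "\<exists>a b c d. a \<ge> 0 \<and> b \<ge> 0 \<and> c \<ge> 0 \<and> d \<ge> 0 \<and> a + b + c + d = 1 \<and>
           q = a *\<^sub>R Q1 + b *\<^sub>R Q2 + c *\<^sub>R Q3 + d *\<^sub>R Q4"
proof -
  obtain u v r where uv: "u \<ge> 0" "v \<ge> 0" "u + v = 1" "r \<in> convex hull {Q2, Q3, Q4}"
    "q = u *\<^sub>R Q1 + v *\<^sub>R r"
    using assms unfolding convex_hull_insert[of "{Q2, Q3, Q4}" Q1, simplified] by blast
  obtain x y z where xyz: "x \<ge> 0" "y \<ge> 0" "z \<ge> 0" "x + y + z = 1"
    "r = x *\<^sub>R Q2 + y *\<^sub>R Q3 + z *\<^sub>R Q4"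
    using uv(4) unfolding convex_hull_3 by blast
  have "q = u *\<^sub>R Q1 + (v * x) *\<^sub>R Q2 + (v * y) *\<^sub>R Q3 + (v * z) *\<^sub>R Q4"
    using uv(5) xyz(5) by (simp add: scaleR_add_right)
  moreover have "u + v * x + v * y + v * z = 1" using uv(3) xyz(4)
    by (metis add.assoc distrib_left mult.right_neutral)
  ultimately show ?thesis using uv xyz by (intro exI[of _ u] exI[of _ "v * x"] exI[of _ "v * y"] exI[of _ "v * z"]) auto
qed

lemma interior_pos:
  fixes X Q1 Q2 Q3 Q4 p :: pt
  assumes "p \<in> interior (hedral_angle X Q1 Q2 Q3 Q4)"
  shows "\<exists>m1 m2 m3 m4. m1 > 0 \<and> m2 > 0 \<and> m3 > 0 \<and> m4 > 0 \<and>
     p - X = m1 *\<^sub>R (Q1 - X) + m2 *\<^sub>R (Q2 - X) + m3 *\<^sub>R (Q3 - X) + m4 *\<^sub>R (Q4 - X)"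
proof -
  obtain e where e: "e > 0" "ball p e \<subseteq> hedral_angle X Q1 Q2 Q3 Q4"
    using assms mem_interior by blast
  let ?w = "(Q1 - X) + (Q2 - X) + (Q3 - X) + (Q4 - X)"
  define \<delta> where "\<delta> = e / (2 * (norm ?w + 1))"
  have w1: "norm ?w + 1 > 0" by (simp add: add_nonneg_pos)
  have dpos: "\<delta> > 0" unfolding \<delta>_def using e w1 by simp
  have "norm (\<delta> *\<^sub>R ?w) = \<delta> * norm ?w" using dpos by simp
  also have "\<dots> < e"
  proof -
    have "\<delta> * norm ?w \<le> \<delta> * (norm ?w + 1)" using dpos by simp
    also have "\<dots> = e / 2" unfolding \<delta>_def using w1 by (simp add: field_simps)
    finally show ?thesis using e by simp
  qed
  finally have "p - \<delta> *\<^sub>R ?w \<in> ball p e" by (simp add: dist_norm)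
  then have "p - \<delta> *\<^sub>R ?w \<in> hedral_angle X Q1 Q2 Q3 Q4" using e by blast
  then obtain s q where sq: "s \<ge> 0" "q \<in> convex hull {Q1, Q2, Q3, Q4}"
    "p - \<delta> *\<^sub>R ?w = X + s *\<^sub>R (q - X)"
    unfolding hedral_angle_def by blast
  obtain a b c d where abcd: "a \<ge> 0" "b \<ge> 0" "c \<ge> 0" "d \<ge> 0" "a + b + c + d = 1"
    "q = a *\<^sub>R Q1 + b *\<^sub>R Q2 + c *\<^sub>R Q3 + d *\<^sub>R Q4"
    using hull4_out[OF sq(2)] by blast
  have qX: "q - X = a *\<^sub>R (Q1 - X) + b *\<^sub>R (Q2 - X) + c *\<^sub>R (Q3 - X) + d *\<^sub>R (Q4 - X)"
  proof -
    have "X = (a + b + c + d) *\<^sub>R X" using abcd(5) by simp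
    then show ?thesis using abcd(6) by (simp add: algebra_simps)
  qed
  have "p - X = (\<delta> + s * a) *\<^sub>R (Q1 - X) + (\<delta> + s * b) *\<^sub>R (Q2 - X)
      + (\<delta> + s * c) *\<^sub>R (Q3 - X) + (\<delta> + s * d) *\<^sub>R (Q4 - X)"
  proof -
    have "p - X = \<delta> *\<^sub>R ?w + s *\<^sub>R (q - X)" using sq(3) by (simp add: algebra_simps)
    then show ?thesis unfolding qX by (simp add: algebra_simps)
  qed
  moreover have "\<delta> + s * a > 0" "\<delta> + s * b > 0" "\<delta> + s * c > 0" "\<delta> + s * d > 0"
    using dpos sq(1) abcd by (simp_all add: add_pos_nonneg)
  ultimately show ?thesis by blast
qed

lemma cont_trip_aff:
  "continuous_on UNIV (\<lambda>y::pt. trip (y - c) a b)"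
  "continuous_on UNIV (\<lambda>y::pt. trip a (y - c) b)"
  "continuous_on UNIV (\<lambda>y::pt. trip a b (y - c))"
  unfolding trip_def by (intro continuous_intros)+

lemma pos_interior:
  fixes X Q1 Q2 Q3 Q4 p :: pt
  assumes D: "trip (Q1 - X) (Q2 - X) (Q3 - X) \<noteq> 0"
    and n: "n1 > 0" "n2 > 0" "n3 > 0" "n4 > 0"
    and p: "p = X + n1 *\<^sub>R (Q1 - X) + n2 *\<^sub>R (Q2 - X) + n3 *\<^sub>R (Q3 - X) + n4 *\<^sub>R (Q4 - X)"
  shows "p \<in> interior (hedral_angle X Q1 Q2 Q3 Q4)"
proof -
  define a1 a2 a3 a4 where "a1 = Q1 - X" "a2 = Q2 - X" "a3 = Q3 - X" "a4 = Q4 - X"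
  define c where "c = X + n4 *\<^sub>R a4"
  define DD where "DD = trip a1 a2 a3"
  have DD: "DD \<noteq> 0" using D by (simp add: DD_def a1_a2_a3_a4_def)
  define U where "U = {y. 0 < trip (y - c) a2 a3 / DD} \<inter> {y. 0 < trip a1 (y - c) a3 / DD}
     \<inter> {y. 0 < trip a1 a2 (y - c) / DD}"
  have "open U" unfolding U_def
    by (intro open_Int open_Collect_less continuous_on_divide continuous_on_const cont_trip_aff) (simp_all add: DD)
  moreover have "p \<in> U"
  proof -
    have pc: "p - c = n1 *\<^sub>R a1 + n2 *\<^sub>R a2 + n3 *\<^sub>R a3"
      using p by (simp add: c_def a1_a2_a3_a4_def algebra_simps)
    show ?thesis unfolding U_def using DD n
      by (simp add: pc trip_lin1 trip_lin2 trip_lin3 DD_def)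
  qed
  moreover have "U \<subseteq> hedral_angle X Q1 Q2 Q3 Q4"
  proof
    fix y assume "y \<in> U"
    then have g: "0 < trip (y - c) a2 a3 / DD" "0 < trip a1 (y - c) a3 / DD" "0 < trip a1 a2 (y - c) / DD"
      unfolding U_def by auto
    define g1 g2 g3 where "g1 = trip (y - c) a2 a3 / DD" "g2 = trip a1 (y - c) a3 / DD"
      "g3 = trip a1 a2 (y - c) / DD"
    have yc: "y - c = g1 *\<^sub>R a1 + g2 *\<^sub>R a2 + g3 *\<^sub>R a3"
      using trip_cramer[of a1 a2 a3 "y - c"] DD unfolding g1_g2_g3_def DD_def by simp
    define S where "S = g1 + g2 + g3 + n4"
    have S: "S > 0" using g n unfolding S_def g1_g2_g3_def by simp
    define q where "q = (g1 / S) *\<^sub>R Q1 + (g2 / S) *\<^sub>R Q2 + (g3 / S) *\<^sub>R Q3 + (n4 / S) *\<^sub>R Q4"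
    have sum1: "g1 / S + g2 / S + g3 / S + n4 / S = 1"
    proof -
      have "g1 / S + g2 / S + g3 / S + n4 / S = (g1 + g2 + g3 + n4) / S" by (simp add: add_divide_distrib)
      then show ?thesis using S unfolding S_def by simp
    qed
    have gp: "g1 > 0" "g2 > 0" "g3 > 0" using g unfolding g1_g2_g3_def by auto
    have qh: "q \<in> convex hull {Q1, Q2, Q3, Q4}" unfolding q_def
      by (rule hull4_in) (use gp n S sum1 in auto)
    have "S *\<^sub>R (q - X) = g1 *\<^sub>R a1 + g2 *\<^sub>R a2 + g3 *\<^sub>R a3 + n4 *\<^sub>R a4"
    proof -
      have "X = (g1 / S + g2 / S + g3 / S + n4 / S) *\<^sub>R X" using sum1 by simp
      then have "q - X = (g1 / S) *\<^sub>R a1 + (g2 / S) *\<^sub>R a2 + (g3 / S) *\<^sub>R a3 + (n4 / S) *\<^sub>R a4"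
        unfolding q_def a1_a2_a3_a4_def by (simp add: algebra_simps)
      then show ?thesis using S by (simp add: scaleR_add_right)
    qed
    then have "y = X + S *\<^sub>R (q - X)" using yc by (simp add: c_def algebra_simps)
    then show "y \<in> hedral_angle X Q1 Q2 Q3 Q4"
      unfolding hedral_angle_def using S qh less_imp_le by blast
  qed
  ultimately show ?thesis using interior_maximal interior_open by blast
qed

lemma ev_pos:
  fixes f :: "real \<Rightarrow> real"
  assumes "isCont f 0" "f 0 > 0"
  shows "eventually (\<lambda>t. f t > 0) (nhds 0)"
proof -
  have "eventually (\<lambda>t. f t > 0) (at 0)"
    using order_tendstoD(1)[OF assms(1)[unfolded isCont_def] assms(2)] .
  then show ?thesis using assms(2) eventually_nhds_conv_at by blast
qed

lemma cont_trip_t [continuous_intros]: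
  "isCont (\<lambda>t::real. trip (a + t *\<^sub>R a') (b + t *\<^sub>R b') (c + t *\<^sub>R c')) x"
  unfolding trip_def by (intro continuous_intros)


lemma noncol_base:
  fixes X p q :: pt
  assumes "\<And>x y. x *\<^sub>R p + y *\<^sub>R q = 0 \<Longrightarrow> x = 0 \<and> y = 0"
  shows "\<not> collinear {X, X + p, X + q}"
proof
  assume c: "collinear {X, X + p, X + q}"
  have e: "{X + p, X, X + q} = {X, X + p, X + q}" by auto
  have nm: "NO_MATCH 0 (X + p)" by (simp add: NO_MATCH_def)
  have "collinear {0, (X + p) - X, (X + q) - X}"
    using collinear_3[OF nm, of X "X + q"] c unfolding e by blast
  then have "collinear {0, p, q}" by simp
  then have "p = 0 \<or> q = 0 \<or> (\<exists>c. q = c *\<^sub>R p)" using collinear_lemma by blast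
  then show False
  proof (elim disjE exE)
    assume "p = 0" then show False using assms[of 1 0] by simp
  next
    assume "q = 0" then show False using assms[of 0 1] by simp
  next
    fix c assume "q = c *\<^sub>R p"
    then have "c *\<^sub>R p + (-1) *\<^sub>R q = 0" by simp
    from assms[OF this] show False by simp
  qed
qed
lemma in_aff_line:
  fixes X E :: pt
  assumes "affine P" "X \<in> P" "E \<in> P"
  shows "X + s *\<^sub>R (l *\<^sub>R (E - X)) \<in> P"
proof -
  have "X + s *\<^sub>R (l *\<^sub>R (E - X)) = (1 - s * l) *\<^sub>R X + (s * l) *\<^sub>R E"
    by (simp add: algebra_simps)
  then show ?thesis using mem_affine[OF assms(1-3), of "1 - s * l" "s * l"] by simp
qed

lemma vertex_point:
  fixes X E1 E2 E3 E4 v1 v2 v3 v4 :: pt and P1 P2 P3 P4 :: "pt set"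
    and A B C \<alpha> \<beta> \<tau> m4 R1 R2 R3 l1 l2 l3 l4 :: real
  assumes D: "trip v1 v2 v3 \<noteq> 0"
    and v4: "v4 = A *\<^sub>R v1 + B *\<^sub>R v2 + C *\<^sub>R v3"
    and ABC: "A > 0" "B < 0" "C > 0"
    and al: "0 < \<alpha>" "\<alpha> < 1" "0 < \<beta>" "\<beta> < 1"
    and r: "\<tau> *\<^sub>R e3 - m4 *\<^sub>R v4 = R1 *\<^sub>R v1 + R2 *\<^sub>R v2 + R3 *\<^sub>R v3"
    and Rpos: "R1 > 0" "R2 > 0" "R3 > 0" "m4 > 0"
    and ve: "v1 = l1 *\<^sub>R (E1 - X)" "v2 = l2 *\<^sub>R (E2 - X)" "v3 = l3 *\<^sub>R (E3 - X)" "v4 = l4 *\<^sub>R (E4 - X)"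
    and P1: "affine P1" "aff_dim P1 \<le> 2" "X \<in> P1" "E1 \<in> P1" "E2 \<in> P1"
    and P2: "affine P2" "aff_dim P2 \<le> 2" "X \<in> P2" "E2 \<in> P2" "E3 \<in> P2"
    and P3: "affine P3" "aff_dim P3 \<le> 2" "X \<in> P3" "E3 \<in> P3" "E4 \<in> P3"
    and P4: "affine P4" "aff_dim P4 \<le> 2" "X \<in> P4" "E4 \<in> P4" "E1 \<in> P4"
  shows "admissible_angle_planes X P1 P2 P3 P4"
proof -
  define s1 s2 s3 where "s1 = \<beta> * A / (1 - \<alpha>)" "s2 = - \<beta> * B / (1 - \<beta>)" "s3 = \<beta> * C / \<alpha>"
  have s: "s1 > 0" "s2 > 0" "s3 > 0"
  proof -
    show "s1 > 0" unfolding s1_s2_s3_def using ABC al by simp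
    have "\<beta> * B < 0" using ABC al by (simp add: mult_pos_neg)
    then have "\<beta> * B / (1 - \<beta>) < 0" using al by (simp add: divide_neg_pos)
    then show "s2 > 0" unfolding s1_s2_s3_def by simp
    show "s3 > 0" unfolding s1_s2_s3_def using ABC al by simp
  qed
  have s1e: "(1 - \<alpha>) * s1 = \<beta> * A" "(1 - \<beta>) * s2 = - \<beta> * B" "\<alpha> * s3 = \<beta> * C"
    unfolding s1_s2_s3_def using al by auto
  define Q1 Q2 Q3 Q4 where "Q1 = X + s1 *\<^sub>R v1" "Q2 = X + s2 *\<^sub>R v2" "Q3 = X + s3 *\<^sub>R v3"
    "Q4 = X + 1 *\<^sub>R v4"
  have ind: "x = 0 \<and> y = 0 \<and> z = 0" if "x *\<^sub>R v1 + y *\<^sub>R v2 + z *\<^sub>R v3 = 0" for x y z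
    using trip_indep[OF D that] .
  define M where "M = X + (\<beta> * A) *\<^sub>R v1 + (\<beta> * C) *\<^sub>R v3"
  have M1: "M = (1 - \<alpha>) *\<^sub>R Q1 + \<alpha> *\<^sub>R Q3"
  proof -
    have "(1 - \<alpha>) *\<^sub>R Q1 + \<alpha> *\<^sub>R Q3 = X + ((1 - \<alpha>) * s1) *\<^sub>R v1 + (\<alpha> * s3) *\<^sub>R v3"
      unfolding Q1_Q2_Q3_Q4_def by (simp add: algebra_simps)
    then show ?thesis unfolding M_def s1e by simp
  qed
  have M2: "M = (1 - \<beta>) *\<^sub>R Q2 + \<beta> *\<^sub>R Q4"
  proof -
    have "(1 - \<beta>) *\<^sub>R Q2 + \<beta> *\<^sub>R Q4 = X + ((1 - \<beta>) * s2) *\<^sub>R v2 + \<beta> *\<^sub>R v4"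
      unfolding Q1_Q2_Q3_Q4_def by (simp add: algebra_simps)
    then show ?thesis unfolding M_def s1e v4 by (simp add: algebra_simps)
  qed
  have Q13: "Q1 \<noteq> Q3"
  proof
    assume "Q1 = Q3"
    then have "s1 *\<^sub>R v1 + 0 *\<^sub>R v2 + (- s3) *\<^sub>R v3 = 0" unfolding Q1_Q2_Q3_Q4_def by simp
    from ind[OF this] show False using s by simp
  qed
  have Q24: "Q2 \<noteq> Q4"
  proof
    assume "Q2 = Q4"
    then have "A *\<^sub>R v1 + (B - s2) *\<^sub>R v2 + C *\<^sub>R v3 = 0"
      unfolding Q1_Q2_Q3_Q4_def v4 by (simp add: algebra_simps)
    from ind[OF this] show False using ABC by simp
  qed
  have ncol: "\<not> collinear {Q1, Q2, Q3}"
  proof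
    assume "collinear {Q1, Q2, Q3}"
    then have "collinear {0, Q1 - Q2, Q3 - Q2}" using collinear_3[of Q1 Q2 Q3]
      unfolding Q1_Q2_Q3_Q4_def by simp
    then have "Q1 - Q2 = 0 \<or> Q3 - Q2 = 0 \<or> (\<exists>c. Q3 - Q2 = c *\<^sub>R (Q1 - Q2))"
      using collinear_lemma by blast
    then show False
    proof (elim disjE exE)
      assume "Q1 - Q2 = 0"
      then have "s1 *\<^sub>R v1 + (- s2) *\<^sub>R v2 + 0 *\<^sub>R v3 = 0" unfolding Q1_Q2_Q3_Q4_def by simp
      from ind[OF this] show False using s by simp
    next
      assume "Q3 - Q2 = 0"
      then have "0 *\<^sub>R v1 + (- s2) *\<^sub>R v2 + s3 *\<^sub>R v3 = 0" unfolding Q1_Q2_Q3_Q4_def by simp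
      from ind[OF this] show False using s by simp
    next
      fix c assume "Q3 - Q2 = c *\<^sub>R (Q1 - Q2)"
      then have "(- c * s1) *\<^sub>R v1 + (c * s2 - s2) *\<^sub>R v2 + s3 *\<^sub>R v3 = 0"
        unfolding Q1_Q2_Q3_Q4_def by (simp add: algebra_simps)
      from ind[OF this] show False using s by simp
    qed
  qed
  have cq: "convex_quad Q1 Q2 Q3 Q4"
  proof -
    have "M \<in> open_segment Q1 Q3" using M1 Q13 al unfolding in_segment(2) by blast
    moreover have "M \<in> open_segment Q2 Q4" using M2 Q24 al unfolding in_segment(2) by blast
    moreover have "\<not> collinear {Q1, Q2, Q3, Q4}"
      using ncol collinear_subset[of "{Q1, Q2, Q3, Q4}" "{Q1, Q2, Q3}"] by blast
    ultimately show ?thesis unfolding convex_quad_def by blast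
  qed
  have Q4h: "Q4 \<in> affine hull {Q1, Q2, Q3}"
  proof -
    have "\<beta> *\<^sub>R Q4 = (1 - \<alpha>) *\<^sub>R Q1 + \<alpha> *\<^sub>R Q3 - (1 - \<beta>) *\<^sub>R Q2"
      using M1 M2 by (simp add: algebra_simps)
    then have "Q4 = ((1 - \<alpha>) / \<beta>) *\<^sub>R Q1 + (- (1 - \<beta>) / \<beta>) *\<^sub>R Q2 + (\<alpha> / \<beta>) *\<^sub>R Q3"
    proof -
      assume h: "\<beta> *\<^sub>R Q4 = (1 - \<alpha>) *\<^sub>R Q1 + \<alpha> *\<^sub>R Q3 - (1 - \<beta>) *\<^sub>R Q2"
      have "Q4 = (1 / \<beta>) *\<^sub>R (\<beta> *\<^sub>R Q4)" using al by simp
      also have "\<dots> = ((1 - \<alpha>) / \<beta>) *\<^sub>R Q1 + (- (1 - \<beta>) / \<beta>) *\<^sub>R Q2 + (\<alpha> / \<beta>) *\<^sub>R Q3"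
        unfolding h by (simp add: algebra_simps diff_divide_distrib)
      finally show ?thesis .
    qed
    moreover have "(1 - \<alpha>) / \<beta> + (- (1 - \<beta>) / \<beta>) + \<alpha> / \<beta> = 1"
      using al by (simp add: field_simps)
    ultimately show ?thesis unfolding affine_hull_3 by blast
  qed
  have nX: "X \<notin> affine hull {Q1, Q2, Q3, Q4}"
  proof
    assume "X \<in> affine hull {Q1, Q2, Q3, Q4}"
    moreover have "affine hull {Q1, Q2, Q3, Q4} = affine hull {Q1, Q2, Q3}"
      using hull_redundant[OF Q4h] by (simp add: insert_commute)
    ultimately have "X \<in> affine hull {Q1, Q2, Q3}" by simp
    then obtain a b c where abc: "a + b + c = 1" "X = a *\<^sub>R Q1 + b *\<^sub>R Q2 + c *\<^sub>R Q3"
      unfolding affine_hull_3 by blast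
    have "a *\<^sub>R Q1 + b *\<^sub>R Q2 + c *\<^sub>R Q3 = (a + b + c) *\<^sub>R X + (a * s1) *\<^sub>R v1 + (b * s2) *\<^sub>R v2 + (c * s3) *\<^sub>R v3"
      unfolding Q1_Q2_Q3_Q4_def by (simp add: algebra_simps)
    then have "(a * s1) *\<^sub>R v1 + (b * s2) *\<^sub>R v2 + (c * s3) *\<^sub>R v3 = 0" using abc by (simp add: add.assoc)
    from ind[OF this] have "a * s1 = 0" "b * s2 = 0" "c * s3 = 0" by auto
    then have "a = 0" "b = 0" "c = 0" using s by auto
    then show False using abc(1) by simp
  qed
  have Qin: "Q1 \<in> P1" "Q1 \<in> P4" "Q2 \<in> P1" "Q2 \<in> P2" "Q3 \<in> P2" "Q3 \<in> P3" "Q4 \<in> P3" "Q4 \<in> P4"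
    unfolding Q1_Q2_Q3_Q4_def ve using in_aff_line P1 P2 P3 P4 by blast+
  have pr12: "x = 0 \<and> y = 0" if "x *\<^sub>R (s1 *\<^sub>R v1) + y *\<^sub>R (s2 *\<^sub>R v2) = 0" for x y
  proof -
    have "(x * s1) *\<^sub>R v1 + (y * s2) *\<^sub>R v2 + 0 *\<^sub>R v3 = 0" using that by simp
    from ind[OF this] show ?thesis using s by simp
  qed
  have pr23: "x = 0 \<and> y = 0" if "x *\<^sub>R (s2 *\<^sub>R v2) + y *\<^sub>R (s3 *\<^sub>R v3) = 0" for x y
  proof -
    have "0 *\<^sub>R v1 + (x * s2) *\<^sub>R v2 + (y * s3) *\<^sub>R v3 = 0" using that by simp
    from ind[OF this] show ?thesis using s by simp
  qed
  have pr34: "x = 0 \<and> y = 0" if "x *\<^sub>R (s3 *\<^sub>R v3) + y *\<^sub>R (1 *\<^sub>R v4) = 0" for x y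
  proof -
    have "(y * A) *\<^sub>R v1 + (y * B) *\<^sub>R v2 + (x * s3 + y * C) *\<^sub>R v3 = 0"
      using that unfolding v4 by (simp add: algebra_simps)
    from ind[OF this] have "y * A = 0" "x * s3 + y * C = 0" by auto
    then show ?thesis using ABC s by auto
  qed
  have pr41: "x = 0 \<and> y = 0" if "x *\<^sub>R (1 *\<^sub>R v4) + y *\<^sub>R (s1 *\<^sub>R v1) = 0" for x y
  proof -
    have "(x * A + y * s1) *\<^sub>R v1 + (x * B) *\<^sub>R v2 + (x * C) *\<^sub>R v3 = 0"
      using that unfolding v4 by (simp add: algebra_simps)
    from ind[OF this] have "x * C = 0" "x * A + y * s1 = 0" by auto
    then show ?thesis using ABC s by auto
  qed
  have n12: "\<not> collinear {X, X + s1 *\<^sub>R v1, X + s2 *\<^sub>R v2}" by (rule noncol_base) (erule pr12)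
  have pl1: "P1 = affine hull {X, Q1, Q2}"
    by (rule plane_eq[OF P1(1,2)]) (use P1(3) Qin n12 in \<open>auto simp: Q1_Q2_Q3_Q4_def\<close>)
  have n23: "\<not> collinear {X, X + s2 *\<^sub>R v2, X + s3 *\<^sub>R v3}" by (rule noncol_base) (erule pr23)
  have pl2: "P2 = affine hull {X, Q2, Q3}"
    by (rule plane_eq[OF P2(1,2)]) (use P2(3) Qin n23 in \<open>auto simp: Q1_Q2_Q3_Q4_def\<close>)
  have n34: "\<not> collinear {X, X + s3 *\<^sub>R v3, X + 1 *\<^sub>R v4}" by (rule noncol_base) (erule pr34)
  have pl3: "P3 = affine hull {X, Q3, Q4}"
    by (rule plane_eq[OF P3(1,2)]) (use P3(3) Qin n34 in \<open>auto simp: Q1_Q2_Q3_Q4_def\<close>)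
  have n41: "\<not> collinear {X, X + 1 *\<^sub>R v4, X + s1 *\<^sub>R v1}" by (rule noncol_base) (erule pr41)
  have pl4: "P4 = affine hull {X, Q4, Q1}"
    by (rule plane_eq[OF P4(1,2)]) (use P4(3) Qin n41 in \<open>auto simp: Q1_Q2_Q3_Q4_def\<close>)
  have int: "X + \<tau> *\<^sub>R e3 \<in> interior (hedral_angle X Q1 Q2 Q3 Q4)"
  proof (rule pos_interior)
    show "trip (Q1 - X) (Q2 - X) (Q3 - X) \<noteq> 0"
      unfolding Q1_Q2_Q3_Q4_def using trip_scale[of s1 v1 s2 v2 s3 v3] D s by simp
    show "R1 / s1 > 0" "R2 / s2 > 0" "R3 / s3 > 0" "m4 > 0" using Rpos s by auto
    show "X + \<tau> *\<^sub>R e3 = X + (R1 / s1) *\<^sub>R (Q1 - X) + (R2 / s2) *\<^sub>R (Q2 - X) + (R3 / s3) *\<^sub>R (Q3 - X) + m4 *\<^sub>R (Q4 - X)"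
    proof -
      have h: "(R1 / s1) *\<^sub>R (Q1 - X) = R1 *\<^sub>R v1" "(R2 / s2) *\<^sub>R (Q2 - X) = R2 *\<^sub>R v2"
        "(R3 / s3) *\<^sub>R (Q3 - X) = R3 *\<^sub>R v3" "m4 *\<^sub>R (Q4 - X) = m4 *\<^sub>R v4"
        unfolding Q1_Q2_Q3_Q4_def using s by auto
      have e: "\<tau> *\<^sub>R e3 = R1 *\<^sub>R v1 + R2 *\<^sub>R v2 + R3 *\<^sub>R v3 + m4 *\<^sub>R v4"
        using r by (simp add: algebra_simps)
      show ?thesis unfolding h e by (simp add: add.assoc)
    qed
  qed
  show ?thesis unfolding admissible_angle_planes_def
    using cq nX pl1 pl2 pl3 pl4 int by blast
qed



lemma D0_lemma:
  fixes X Q1 Q2 Q3 Q4 :: pt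
  assumes cq: "convex_quad Q1 Q2 Q3 Q4" and nX: "X \<notin> affine hull {Q1, Q2, Q3, Q4}"
  shows "trip (Q1 - X) (Q2 - X) (Q3 - X) \<noteq> 0"
proof
  assume "trip (Q1 - X) (Q2 - X) (Q3 - X) = 0"
  then obtain x y z where xyz: "x \<noteq> 0 \<or> y \<noteq> 0 \<or> z \<noteq> 0"
    "x *\<^sub>R (Q1 - X) + y *\<^sub>R (Q2 - X) + z *\<^sub>R (Q3 - X) = 0"
    using trip_kernel by blast
  have eq: "x *\<^sub>R Q1 + y *\<^sub>R Q2 + z *\<^sub>R Q3 = (x + y + z) *\<^sub>R X"
    using xyz(2) by (simp add: algebra_simps)
  show False
  proof (cases "x + y + z = 0")
    case False
    let ?S = "x + y + z"
    have "X = (1 / ?S) *\<^sub>R (?S *\<^sub>R X)" using False by simp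
    also have "\<dots> = (x / ?S) *\<^sub>R Q1 + (y / ?S) *\<^sub>R Q2 + (z / ?S) *\<^sub>R Q3"
      unfolding eq[symmetric] by (simp add: scaleR_add_right)
    finally have Xe: "X = (x / ?S) *\<^sub>R Q1 + (y / ?S) *\<^sub>R Q2 + (z / ?S) *\<^sub>R Q3" .
    have "x / ?S + y / ?S + z / ?S = 1" using False by (simp add: add_divide_distrib[symmetric])
    then have "X \<in> affine hull {Q1, Q2, Q3}" unfolding affine_hull_3 using Xe by blast
    moreover have "affine hull {Q1, Q2, Q3} \<subseteq> affine hull {Q1, Q2, Q3, Q4}"
      by (rule hull_mono) auto
    ultimately show False using nX by blast
  next
    case True
    then have z: "z = - x - y" by simp
    have e2: "x *\<^sub>R (Q1 - Q3) + y *\<^sub>R (Q2 - Q3) = 0"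
      using eq True unfolding z by (simp add: algebra_simps)
    have "collinear {Q1, Q2, Q3}"
    proof (cases "x = 0")
      case True
      then have "y \<noteq> 0" using xyz(1) z by auto
      then have "Q2 = Q3" using e2 True by simp
      then show ?thesis by simp
    next
      case False
      have h1: "Q1 = Q3 + (- y / x) *\<^sub>R (Q2 - Q3)"
      proof -
        have "x *\<^sub>R (Q1 - Q3) = - y *\<^sub>R (Q2 - Q3)" using e2 by (simp add: eq_neg_iff_add_eq_0)
        then have "(1 / x) *\<^sub>R (x *\<^sub>R (Q1 - Q3)) = (1 / x) *\<^sub>R (- y *\<^sub>R (Q2 - Q3))" by simp
        then have "Q1 - Q3 = (- y / x) *\<^sub>R (Q2 - Q3)" using False by simp
        then show ?thesis by (simp add: algebra_simps)
      qed
      have h2: "Q2 = Q3 + 1 *\<^sub>R (Q2 - Q3)" "Q3 = Q3 + 0 *\<^sub>R (Q2 - Q3)" by simp_all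
      have "\<forall>p\<in>{Q1, Q2, Q3}. \<exists>c. p = Q3 + c *\<^sub>R (Q2 - Q3)"
      proof
        fix p assume "p \<in> {Q1, Q2, Q3}"
        then have "p = Q1 \<or> p = Q2 \<or> p = Q3" by blast
        then show "\<exists>c. p = Q3 + c *\<^sub>R (Q2 - Q3)" using h1 h2 by blast
      qed
      then show ?thesis unfolding collinear_alt by blast
    qed
    then show False using cq_noncol3[OF cq] by blast
  qed
qed


lemma vertex_stable:
  fixes X Q1 Q2 Q3 Q4 E1 E2 E3 E4 dX dEa dEb dEc dEd :: pt
    and P1 P2 P3 P4 :: "real \<Rightarrow> pt set" and \<tau> l1 l2 l3 l4 :: real
  assumes cq: "convex_quad Q1 Q2 Q3 Q4"
    and nX: "X \<notin> affine hull {Q1, Q2, Q3, Q4}"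
    and tau: "X + \<tau> *\<^sub>R e3 \<in> interior (hedral_angle X Q1 Q2 Q3 Q4)"
    and l: "Q1 - X = l1 *\<^sub>R (E1 - X)" "Q2 - X = l2 *\<^sub>R (E2 - X)"
           "Q3 - X = l3 *\<^sub>R (E3 - X)" "Q4 - X = l4 *\<^sub>R (E4 - X)"
    and P1: "\<And>t. affine (P1 t)" "\<And>t. aff_dim (P1 t) \<le> 2" "\<And>t. X + t *\<^sub>R dX \<in> P1 t"
            "\<And>t. E1 + t *\<^sub>R dEa \<in> P1 t" "\<And>t. E2 + t *\<^sub>R dEb \<in> P1 t"
    and P2: "\<And>t. affine (P2 t)" "\<And>t. aff_dim (P2 t) \<le> 2" "\<And>t. X + t *\<^sub>R dX \<in> P2 t"
            "\<And>t. E2 + t *\<^sub>R dEb \<in> P2 t" "\<And>t. E3 + t *\<^sub>R dEc \<in> P2 t"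
    and P3: "\<And>t. affine (P3 t)" "\<And>t. aff_dim (P3 t) \<le> 2" "\<And>t. X + t *\<^sub>R dX \<in> P3 t"
            "\<And>t. E3 + t *\<^sub>R dEc \<in> P3 t" "\<And>t. E4 + t *\<^sub>R dEd \<in> P3 t"
    and P4: "\<And>t. affine (P4 t)" "\<And>t. aff_dim (P4 t) \<le> 2" "\<And>t. X + t *\<^sub>R dX \<in> P4 t"
            "\<And>t. E4 + t *\<^sub>R dEd \<in> P4 t" "\<And>t. E1 + t *\<^sub>R dEa \<in> P4 t"
  shows "eventually (\<lambda>t. admissible_angle_planes (X + t *\<^sub>R dX) (P1 t) (P2 t) (P3 t) (P4 t)) (nhds 0)"
proof -
  define u1 u2 u3 u4 where "u1 = Q1 - X" "u2 = Q2 - X" "u3 = Q3 - X" "u4 = Q4 - X"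
  define w1 w2 w3 w4 where "w1 = l1 *\<^sub>R (dEa - dX)" "w2 = l2 *\<^sub>R (dEb - dX)"
    "w3 = l3 *\<^sub>R (dEc - dX)" "w4 = l4 *\<^sub>R (dEd - dX)"
  have D0: "trip u1 u2 u3 \<noteq> 0" unfolding u1_u2_u3_u4_def using D0_lemma[OF cq nX] .
  obtain M where M: "M \<in> open_segment Q1 Q3" "M \<in> open_segment Q2 Q4"
    using cq unfolding convex_quad_def by blast
  obtain \<alpha> where al: "0 < \<alpha>" "\<alpha> < 1" "M = (1 - \<alpha>) *\<^sub>R Q1 + \<alpha> *\<^sub>R Q3"
    using M(1) unfolding in_segment(2) by blast
  obtain \<beta> where be: "0 < \<beta>" "\<beta> < 1" "M = (1 - \<beta>) *\<^sub>R Q2 + \<beta> *\<^sub>R Q4"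
    using M(2) unfolding in_segment(2) by blast
  define a4 b4 c4 where "a4 = (1 - \<alpha>) / \<beta>" "b4 = - (1 - \<beta>) / \<beta>" "c4 = \<alpha> / \<beta>"
  have u4e: "u4 = a4 *\<^sub>R u1 + b4 *\<^sub>R u2 + c4 *\<^sub>R u3"
  proof -
    have h: "\<beta> *\<^sub>R u4 = (1 - \<alpha>) *\<^sub>R u1 + \<alpha> *\<^sub>R u3 - (1 - \<beta>) *\<^sub>R u2"
    proof -
      have "(1 - \<alpha>) *\<^sub>R Q1 + \<alpha> *\<^sub>R Q3 = (1 - \<beta>) *\<^sub>R Q2 + \<beta> *\<^sub>R Q4" using al be by simp
      then show ?thesis unfolding u1_u2_u3_u4_def by (simp add: algebra_simps)
    qed
    have "u4 = (1 / \<beta>) *\<^sub>R (\<beta> *\<^sub>R u4)" using be by simp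
    also have "\<dots> = a4 *\<^sub>R u1 + b4 *\<^sub>R u2 + c4 *\<^sub>R u3"
      unfolding h a4_b4_c4_def by (simp add: algebra_simps diff_divide_distrib)
    finally show ?thesis .
  qed
  have abc4: "a4 > 0" "b4 < 0" "c4 > 0" unfolding a4_b4_c4_def using al(1,2) be(1,2)
    by (auto simp: divide_neg_pos)
  obtain m1 m2 m3 m4 where m: "m1 > 0" "m2 > 0" "m3 > 0" "m4 > 0"
    "(X + \<tau> *\<^sub>R e3) - X = m1 *\<^sub>R u1 + m2 *\<^sub>R u2 + m3 *\<^sub>R u3 + m4 *\<^sub>R u4"
    using interior_pos[OF tau] unfolding u1_u2_u3_u4_def by blast
  define r0 rw where "r0 = \<tau> *\<^sub>R e3 - m4 *\<^sub>R u4" "rw = - m4 *\<^sub>R w4"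
  have r0e: "r0 = m1 *\<^sub>R u1 + m2 *\<^sub>R u2 + m3 *\<^sub>R u3" using m(5) unfolding r0_rw_def by simp
  define Dt where "Dt = (\<lambda>t. trip (u1 + t *\<^sub>R w1) (u2 + t *\<^sub>R w2) (u3 + t *\<^sub>R w3))"
  define Af where "Af = (\<lambda>t. trip (u4 + t *\<^sub>R w4) (u2 + t *\<^sub>R w2) (u3 + t *\<^sub>R w3) / Dt t)"
  define Bf where "Bf = (\<lambda>t. trip (u1 + t *\<^sub>R w1) (u4 + t *\<^sub>R w4) (u3 + t *\<^sub>R w3) / Dt t)"
  define Cf where "Cf = (\<lambda>t. trip (u1 + t *\<^sub>R w1) (u2 + t *\<^sub>R w2) (u4 + t *\<^sub>R w4) / Dt t)"
  define R1 where "R1 = (\<lambda>t. trip (r0 + t *\<^sub>R rw) (u2 + t *\<^sub>R w2) (u3 + t *\<^sub>R w3) / Dt t)"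
  define R2 where "R2 = (\<lambda>t. trip (u1 + t *\<^sub>R w1) (r0 + t *\<^sub>R rw) (u3 + t *\<^sub>R w3) / Dt t)"
  define R3 where "R3 = (\<lambda>t. trip (u1 + t *\<^sub>R w1) (u2 + t *\<^sub>R w2) (r0 + t *\<^sub>R rw) / Dt t)"
  have Dt0: "Dt 0 = trip u1 u2 u3" unfolding Dt_def by simp
  have cD: "isCont Dt 0" unfolding Dt_def by (rule cont_trip_t)
  have cA: "isCont Af 0" unfolding Af_def using cD D0 Dt0
    by (intro continuous_intros) (auto simp: Dt_def)
  have cB: "isCont Bf 0" unfolding Bf_def using cD D0 Dt0
    by (intro continuous_intros) (auto simp: Dt_def)
  have cC: "isCont Cf 0" unfolding Cf_def using cD D0 Dt0
    by (intro continuous_intros) (auto simp: Dt_def)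
  have cR1: "isCont R1 0" unfolding R1_def using cD D0 Dt0
    by (intro continuous_intros) (auto simp: Dt_def)
  have cR2: "isCont R2 0" unfolding R2_def using cD D0 Dt0
    by (intro continuous_intros) (auto simp: Dt_def)
  have cR3: "isCont R3 0" unfolding R3_def using cD D0 Dt0
    by (intro continuous_intros) (auto simp: Dt_def)
  have A0: "Af 0 = a4" unfolding Af_def Dt_def using D0 by (simp add: u4e trip_lin1)
  have B0: "Bf 0 = b4" unfolding Bf_def Dt_def using D0 by (simp add: u4e trip_lin2)
  have C0: "Cf 0 = c4" unfolding Cf_def Dt_def using D0 by (simp add: u4e trip_lin3)
  have R10: "R1 0 = m1" unfolding R1_def Dt_def using D0 by (simp add: r0e trip_lin1)
  have R20: "R2 0 = m2" unfolding R2_def Dt_def using D0 by (simp add: r0e trip_lin2)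
  have R30: "R3 0 = m3" unfolding R3_def Dt_def using D0 by (simp add: r0e trip_lin3)
  have ev1: "eventually (\<lambda>t. Dt t * Dt 0 > 0) (nhds 0)"
    by (rule ev_pos) (use cD D0 Dt0 in \<open>auto intro!: continuous_intros simp: zero_less_mult_iff\<close>)
  have ev2: "eventually (\<lambda>t. Af t > 0) (nhds 0)" using ev_pos[OF cA] A0 abc4 by simp
  have ev3: "eventually (\<lambda>t. - Bf t > 0) (nhds 0)"
    using ev_pos[of "\<lambda>t. - Bf t"] cB B0 abc4 by (auto intro: continuous_intros)
  have ev4: "eventually (\<lambda>t. Cf t > 0) (nhds 0)" using ev_pos[OF cC] C0 abc4 by simp
  have ev5: "eventually (\<lambda>t. R1 t > 0) (nhds 0)" using ev_pos[OF cR1] R10 m by simp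
  have ev6: "eventually (\<lambda>t. R2 t > 0) (nhds 0)" using ev_pos[OF cR2] R20 m by simp
  have ev7: "eventually (\<lambda>t. R3 t > 0) (nhds 0)" using ev_pos[OF cR3] R30 m by simp
  have ev: "eventually (\<lambda>t. Dt t * Dt 0 > 0 \<and> Af t > 0 \<and> - Bf t > 0 \<and> Cf t > 0 \<and>
      R1 t > 0 \<and> R2 t > 0 \<and> R3 t > 0) (nhds 0)"
    using ev1 ev2 ev3 ev4 ev5 ev6 ev7 by (intro eventually_conj)
  show ?thesis
  proof (rule eventually_mono[OF ev])
    fix t assume h: "Dt t * Dt 0 > 0 \<and> Af t > 0 \<and> - Bf t > 0 \<and> Cf t > 0 \<and>
      R1 t > 0 \<and> R2 t > 0 \<and> R3 t > 0"
    define v1 v2 v3 v4 where "v1 = u1 + t *\<^sub>R w1" "v2 = u2 + t *\<^sub>R w2" "v3 = u3 + t *\<^sub>R w3"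
      "v4 = u4 + t *\<^sub>R w4"
    have Dn: "trip v1 v2 v3 \<noteq> 0" using h unfolding v1_v2_v3_v4_def Dt_def by auto
    have v4e: "v4 = Af t *\<^sub>R v1 + Bf t *\<^sub>R v2 + Cf t *\<^sub>R v3"
      using trip_cramer[OF Dn, of v4] unfolding Af_def Bf_def Cf_def Dt_def v1_v2_v3_v4_def .
    have re: "\<tau> *\<^sub>R e3 - m4 *\<^sub>R v4 = R1 t *\<^sub>R v1 + R2 t *\<^sub>R v2 + R3 t *\<^sub>R v3"
    proof -
      have "\<tau> *\<^sub>R e3 - m4 *\<^sub>R v4 = r0 + t *\<^sub>R rw"
        unfolding r0_rw_def v1_v2_v3_v4_def by (simp add: algebra_simps)
      then show ?thesis
        using trip_cramer[OF Dn, of "r0 + t *\<^sub>R rw"] unfolding R1_def R2_def R3_def Dt_def v1_v2_v3_v4_def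
        by simp
    qed
    have ve: "v1 = l1 *\<^sub>R ((E1 + t *\<^sub>R dEa) - (X + t *\<^sub>R dX))"
      "v2 = l2 *\<^sub>R ((E2 + t *\<^sub>R dEb) - (X + t *\<^sub>R dX))"
      "v3 = l3 *\<^sub>R ((E3 + t *\<^sub>R dEc) - (X + t *\<^sub>R dX))"
      "v4 = l4 *\<^sub>R ((E4 + t *\<^sub>R dEd) - (X + t *\<^sub>R dX))"
      unfolding v1_v2_v3_v4_def u1_u2_u3_u4_def w1_w2_w3_w4_def l by (simp_all add: algebra_simps)
    show "admissible_angle_planes (X + t *\<^sub>R dX) (P1 t) (P2 t) (P3 t) (P4 t)"
      by (rule vertex_point[OF Dn v4e _ _ _ al(1,2) be(1,2) re _ _ _ m(4) ve
            P1(1-5) P2(1-5) P3(1-5) P4(1-5)]) (use h in auto)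
  qed
qed



lemma iso_comp:
  "(iso_matrix \<phi> c1 c2 *v x) $ 1 = - \<phi> * x $ 2"
  "(iso_matrix \<phi> c1 c2 *v x) $ 2 = \<phi> * x $ 1"
  "(iso_matrix \<phi> c1 c2 *v x) $ 3 = c1 * x $ 1 + c2 * x $ 2"
  unfolding iso_matrix_def matrix_vector_mult_def by (simp_all add: sum_3 vector_3)

lemma iso_inj:
  fixes z :: pt
  assumes "z + t *\<^sub>R (iso_matrix \<phi> c1 c2 *v z) = 0"
  shows "z = 0"
proof -
  have e1: "z$1 - t * \<phi> * z$2 = 0" using arg_cong[OF assms, of "\<lambda>v. v $ 1"] by (simp add: iso_comp)
  have e2: "z$2 + t * \<phi> * z$1 = 0" using arg_cong[OF assms, of "\<lambda>v. v $ 2"] by (simp add: iso_comp)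
  have e3: "z$3 + t * (c1 * z$1 + c2 * z$2) = 0" using arg_cong[OF assms, of "\<lambda>v. v $ 3"] by (simp add: iso_comp)
  have "z$1 * (1 + (t * \<phi>)^2) = 0"
  proof -
    have "z$1 = t * \<phi> * z$2" using e1 by simp
    also have "z$2 = - (t * \<phi> * z$1)" using e2 by simp
    finally have "z$1 = - ((t * \<phi>)^2 * z$1)" by (simp add: power2_eq_square algebra_simps)
    then show ?thesis by (simp add: algebra_simps)
  qed
  moreover have "1 + (t * \<phi>)^2 > 0" by (simp add: add_pos_nonneg)
  ultimately have z1: "z$1 = 0" by simp
  then have z2: "z$2 = 0" using e2 by simp
  then have z3: "z$3 = 0" using e3 z1 by simp
  show ?thesis using z1 z2 z3 unfolding vec_eq_iff forall_3 by simp
qed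

lemma face_map:
  assumes "inf_iso_congruence W"
  shows "\<exists>f d. linear f \<and> inj f \<and> (\<forall>x. x + t *\<^sub>R W x = f x + d)"
proof -
  obtain \<phi> c1 c2 b where W: "\<forall>x. W x = iso_matrix \<phi> c1 c2 *v x + b"
    using assms unfolding inf_iso_congruence_def by blast
  let ?A = "iso_matrix \<phi> c1 c2"
  define f where "f = (\<lambda>x. x + t *\<^sub>R (?A *v x))"
  have lf: "linear f" unfolding f_def
    by (rule linearI) (simp_all add: algebra_simps)
  have "inj f"
  proof (rule injI)
    fix x y assume "f x = f y"
    then have "(x - y) + t *\<^sub>R (?A *v (x - y)) = 0" unfolding f_def by (simp add: algebra_simps)
    then have "x - y = 0" by (rule iso_inj)
    then show "x = y" by simp
  qed
  moreover have "\<forall>x. x + t *\<^sub>R W x = f x + t *\<^sub>R b" unfolding f_def using W by (simp add: algebra_simps)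
  ultimately show ?thesis using lf by blast
qed

lemma get_lambda:
  fixes X A Q B E :: pt
  assumes P: "P = affine hull {X, A, Q}" and P': "P' = affine hull {X, Q, B}"
    and E: "E \<in> P" "E \<in> P'" "E \<noteq> X"
    and nc: "\<not> collinear {A, Q, B}" and nX: "X \<notin> affine hull {A, Q, B}"
  shows "\<exists>l. Q - X = l *\<^sub>R (E - X)"
proof (cases "collinear {X, E, Q}")
  case True
  then have "Q \<in> affine hull {X, E}" using collinear_3_affine_hull[of X E Q] E(3) by auto
  then obtain u v where uv: "u + v = 1" "Q = u *\<^sub>R X + v *\<^sub>R E" unfolding affine_hull_2 by blast
  have "Q - X = v *\<^sub>R (E - X)"
  proof -
    have "X = (u + v) *\<^sub>R X" using uv(1) by simp
    then show ?thesis using uv(2) by (simp add: algebra_simps)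
  qed
  then show ?thesis by blast
next
  case False
  have dim: "aff_dim (affine hull {X, y, z}) \<le> 2" for y z :: pt
  proof -
    have "card {X, y, z} \<le> 3" by (simp add: card_insert_le_m1)
    then show ?thesis using aff_dim_le_card[of "{X, y, z}"] by simp
  qed
  have "P = affine hull {X, E, Q}"
    using plane_eq[of P X E Q] P dim E(1) False by (auto intro: hull_inc)
  moreover have "P' = affine hull {X, E, Q}"
    using plane_eq[of P' X E Q] P' dim E(2) False by (auto intro: hull_inc)
  ultimately have "B \<in> P" using P' by (auto intro: hull_inc)
  moreover have "A \<in> P" "Q \<in> P" using P by (auto intro: hull_inc)
  ultimately have "P = affine hull {A, Q, B}"
    using plane_eq[of P A Q B] P dim nc by auto
  moreover have "X \<in> P" using P by (auto intro: hull_inc)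
  ultimately show ?thesis using nX by simp
qed



theorem lemma2:
  fixes m n :: nat and F V :: "nat \<Rightarrow> nat \<Rightarrow> real^3"
  assumes "dual_convex m n F"
    and "\<forall>k<m. \<forall>l<n. \<exists>W. inf_iso_congruence W \<and>
           (\<forall>i\<in>{k, Suc k}. \<forall>j\<in>{l, Suc l}. V i j = W (F i j))"
  shows "\<exists>\<epsilon>>0. \<forall>t. \<bar>t\<bar> < \<epsilon> \<longrightarrow> dual_convex m n (\<lambda>i j. F i j + t *\<^sub>R V i j)"
proof -
  define G where "G = (\<lambda>t i j. F i j + t *\<^sub>R V i j)"
  have netF: "is_net m n F" and mn: "2 \<le> m" "2 \<le> n"
    and adm: "\<And>i j. 0 < i \<Longrightarrow> i < m \<Longrightarrow> 0 < j \<Longrightarrow> j < n \<Longrightarrow>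
        admissible_angle_planes (F i j)
          (face_plane F (i - 1) (j - 1)) (face_plane F i (j - 1))
          (face_plane F i j) (face_plane F (i - 1) j)"
    using assms(1) unfolding dual_convex_def by auto
  have cqF: "convex_quad (F k l) (F (Suc k) l) (F (Suc k) (Suc l)) (F k (Suc l))"
    if "k < m" "l < n" for k l
    using netF that unfolding is_net_def by blast
  have net: "is_net m n (G t)" for t
    unfolding is_net_def
  proof (intro allI impI)
    fix k l assume kl: "k < m" "l < n"
    obtain W where W: "inf_iso_congruence W" "\<forall>i\<in>{k, Suc k}. \<forall>j\<in>{l, Suc l}. V i j = W (F i j)"
      using assms(2) kl by blast
    obtain f d where fd: "linear f" "inj f" "\<forall>x. x + t *\<^sub>R W x = f x + d"
      using face_map[OF W(1)] by blast
    have Gc: "G t i j = f (F i j) + d" if "i \<in> {k, Suc k}" "j \<in> {l, Suc l}" for i j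
      using W(2) fd(3) that unfolding G_def by metis
    show "convex_quad (G t k l) (G t (Suc k) l) (G t (Suc k) (Suc l)) (G t k (Suc l))"
      using cq_affine_image[OF fd(1,2) cqF[OF kl], of d] Gc by simp
  qed
  have fpd: "aff_dim (face_plane (G t) k l) \<le> 2" if "k < m" "l < n" for t k l
    unfolding face_plane_def using cq_dim net[of t] that unfolding is_net_def by blast
  define I where "I = {p :: nat \<times> nat. 0 < fst p \<and> fst p < m \<and> 0 < snd p \<and> snd p < n}"
  have finI: "finite I"
  proof -
    have "I \<subseteq> {..m} \<times> {..n}" unfolding I_def by auto
    then show ?thesis using finite_subset by blast
  qed
  have evI: "\<forall>p\<in>I. eventually (\<lambda>t. admissible_angle_planes (G t (fst p) (snd p))
          (face_plane (G t) (fst p - 1) (snd p - 1)) (face_plane (G t) (fst p) (snd p - 1))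
          (face_plane (G t) (fst p) (snd p)) (face_plane (G t) (fst p - 1) (snd p))) (nhds 0)"
  proof
    fix p assume "p \<in> I"
    then obtain i j where p: "p = (i, j)" "0 < i" "i < m" "0 < j" "j < n" unfolding I_def by (metis (mono_tags, lifting) mem_Collect_eq prod.collapse)
    obtain a where a: "i = Suc a" using p(2) gr0_implies_Suc by blast
    obtain b where b: "j = Suc b" using p(4) gr0_implies_Suc by blast
    have am: "a < m" "b < n" using a b p by auto
    have ad: "admissible_angle_planes (F i j) (face_plane F a b) (face_plane F i b)
        (face_plane F i j) (face_plane F a j)"
      using adm[OF p(2-5)] a b by simp
    then obtain Q1 Q2 Q3 Q4 \<tau> where Q: "convex_quad Q1 Q2 Q3 Q4" "F i j \<notin> affine hull {Q1, Q2, Q3, Q4}"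
      "face_plane F a b = affine hull {F i j, Q1, Q2}" "face_plane F i b = affine hull {F i j, Q2, Q3}"
      "face_plane F i j = affine hull {F i j, Q3, Q4}" "face_plane F a j = affine hull {F i j, Q4, Q1}"
      "F i j + \<tau> *\<^sub>R e3 \<in> interior (hedral_angle (F i j) Q1 Q2 Q3 Q4)"
      unfolding admissible_angle_planes_def by blast
    have cr1: "convex_quad Q2 Q3 Q4 Q1" using cq_rot Q(1) by blast
    have cr2: "convex_quad Q3 Q4 Q1 Q2" using cq_rot cr1 by blast
    have cr3: "convex_quad Q4 Q1 Q2 Q3" using cq_rot cr2 by blast
    have nXs: "F i j \<notin> affine hull {A, B, C}" if "{A, B, C} \<subseteq> {Q1, Q2, Q3, Q4}" for A B C
      using Q(2) hull_mono[OF that, of affine] by blast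
    have cab: "convex_quad (F a b) (F i b) (F i j) (F a j)" using cqF[OF am] a b by simp
    have cij: "convex_quad (F i j) (F (Suc i) j) (F (Suc i) (Suc j)) (F i (Suc j))"
      using cqF[OF p(3) p(5)] .
    have fab: "face_plane F a b = affine hull {F a b, F i b, F i j, F a j}"
      unfolding face_plane_def using a b by simp
    have fib: "face_plane F i b = affine hull {F i b, F (Suc i) b, F (Suc i) j, F i j}"
      unfolding face_plane_def using a b by simp
    have fij: "face_plane F i j = affine hull {F i j, F (Suc i) j, F (Suc i) (Suc j), F i (Suc j)}"
      unfolding face_plane_def by simp
    have faj: "face_plane F a j = affine hull {F a j, F i j, F i (Suc j), F a (Suc j)}"
      unfolding face_plane_def using a b by simp
    obtain l1 where l1: "Q1 - F i j = l1 *\<^sub>R (F a j - F i j)"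
      using get_lambda[OF Q(6) Q(3), of "F a j"] faj fab cq_distinct(3)[OF cab]
        cq_noncol3[OF cr3] nXs[of Q4 Q1 Q2] by (auto intro: hull_inc)
    obtain l2 where l2: "Q2 - F i j = l2 *\<^sub>R (F i b - F i j)"
      using get_lambda[OF Q(3) Q(4), of "F i b"] fab fib cq_distinct(2)[OF cab]
        cq_noncol3[OF Q(1)] nXs[of Q1 Q2 Q3] by (auto intro: hull_inc)
    obtain l3 where l3: "Q3 - F i j = l3 *\<^sub>R (F (Suc i) j - F i j)"
      using get_lambda[OF Q(4) Q(5), of "F (Suc i) j"] fib fij cq_distinct(1)[OF cij]
        cq_noncol3[OF cr1] nXs[of Q2 Q3 Q4] by (auto intro: hull_inc)
    obtain l4 where l4: "Q4 - F i j = l4 *\<^sub>R (F i (Suc j) - F i j)"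
      using get_lambda[OF Q(5) Q(6), of "F i (Suc j)"] fij faj cq_distinct(4)[OF cij]
        cq_noncol3[OF cr2] nXs[of Q3 Q4 Q1] by (auto intro: hull_inc)
    have Gfab: "face_plane (G t) a b = affine hull {G t a b, G t i b, G t i j, G t a j}" for t
      unfolding face_plane_def using a b by simp
    have Gfib: "face_plane (G t) i b = affine hull {G t i b, G t (Suc i) b, G t (Suc i) j, G t i j}" for t
      unfolding face_plane_def using a b by simp
    have Gfij: "face_plane (G t) i j = affine hull {G t i j, G t (Suc i) j, G t (Suc i) (Suc j), G t i (Suc j)}" for t
      unfolding face_plane_def by simp
    have Gfaj: "face_plane (G t) a j = affine hull {G t a j, G t i j, G t i (Suc j), G t a (Suc j)}" for t
      unfolding face_plane_def using a b by simp
    have mem: "F x y + t *\<^sub>R V x y \<in> face_plane (G t) k l"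
      if "(x, y) \<in> {(k, l), (Suc k, l), (Suc k, Suc l), (k, Suc l)}" for t x y k l
    proof -
      have "G t x y \<in> {G t k l, G t (Suc k) l, G t (Suc k) (Suc l), G t k (Suc l)}" using that by auto
      then show ?thesis unfolding face_plane_def G_def by (rule hull_inc)
    qed
    have Gv: "G t x y = F x y + t *\<^sub>R V x y" for t x y unfolding G_def by simp
    have "eventually (\<lambda>t. admissible_angle_planes (F i j + t *\<^sub>R V i j)
        (face_plane (G t) a b) (face_plane (G t) i b) (face_plane (G t) i j) (face_plane (G t) a j)) (nhds 0)"
    proof (rule vertex_stable[OF Q(1,2,7) l1 l2 l3 l4, where dX = "V i j" and dEa = "V a j"
          and dEb = "V i b" and dEc = "V (Suc i) j" and dEd = "V i (Suc j)"])
      show "\<And>t. affine (face_plane (G t) a b)" "\<And>t. affine (face_plane (G t) i b)"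
        "\<And>t. affine (face_plane (G t) i j)" "\<And>t. affine (face_plane (G t) a j)"
        unfolding face_plane_def by (rule affine_affine_hull)+
      show "\<And>t. aff_dim (face_plane (G t) a b) \<le> 2" "\<And>t. aff_dim (face_plane (G t) i b) \<le> 2"
        "\<And>t. aff_dim (face_plane (G t) i j) \<le> 2" "\<And>t. aff_dim (face_plane (G t) a j) \<le> 2"
        using fpd am p(3,5) a b by auto
    qed (rule mem, simp add: a b)+
    then show "eventually (\<lambda>t. admissible_angle_planes (G t (fst p) (snd p))
          (face_plane (G t) (fst p - 1) (snd p - 1)) (face_plane (G t) (fst p) (snd p - 1))
          (face_plane (G t) (fst p) (snd p)) (face_plane (G t) (fst p - 1) (snd p))) (nhds 0)"
      using p(1) a b by (simp add: Gv)
  qed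
  have "eventually (\<lambda>t. \<forall>p\<in>I. admissible_angle_planes (G t (fst p) (snd p))
          (face_plane (G t) (fst p - 1) (snd p - 1)) (face_plane (G t) (fst p) (snd p - 1))
          (face_plane (G t) (fst p) (snd p)) (face_plane (G t) (fst p - 1) (snd p))) (nhds 0)"
    using eventually_ball_finite[OF finI evI] .
  then obtain \<epsilon> where \<epsilon>: "\<epsilon> > 0" "\<And>t. dist t 0 < \<epsilon> \<Longrightarrow> \<forall>p\<in>I. admissible_angle_planes (G t (fst p) (snd p))
          (face_plane (G t) (fst p - 1) (snd p - 1)) (face_plane (G t) (fst p) (snd p - 1))
          (face_plane (G t) (fst p) (snd p)) (face_plane (G t) (fst p - 1) (snd p))"
    unfolding eventually_nhds_metric by blast
  have "dual_convex m n (G t)" if "\<bar>t\<bar> < \<epsilon>" for t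
  proof -
    have "\<forall>p\<in>I. admissible_angle_planes (G t (fst p) (snd p))
          (face_plane (G t) (fst p - 1) (snd p - 1)) (face_plane (G t) (fst p) (snd p - 1))
          (face_plane (G t) (fst p) (snd p)) (face_plane (G t) (fst p - 1) (snd p))"
      using \<epsilon>(2)[of t] that by simp
    then show ?thesis unfolding dual_convex_def using net[of t] mn unfolding I_def by auto
  qed
  then show ?thesis using \<epsilon>(1) unfolding G_def by blast
qed


end
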